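(* Let $\theta\ge1$ and let $V$ be twice continuously differentiable on $[0,+\infty)$, with $\lim_{x\to+\infty}V(x)/\log x=+\infty$, and such that $V''(x)x+V'(x)>0$ and $V''(x)\ge0$ for all $x>0$. Then there exists a unique $c\in(0,+\infty)$ such that $$\frac{1}{2\pi i}\oint_\gamma\frac{V'(J_c(s))J_c(s)}{s}\,ds=1+\theta.$$
   Context: For $c>0$, $J_c(s)=c(s+1)\left(\frac{s+1}{s}\right)^{1/\theta}$, with branch analytic in $\mathbb C\setminus[-1,0]$ and $J_c(s)\sim cs$ as $s\to\infty$. $\gamma=\gamma_1\cup\gamma_2$ is the counterclockwise oriented closed curve formed by the two complex conjugate arcs joining $-1$ and $1/\theta$ in the upper and lower half-planes on which $J_c$ is real and nonnegative (these arcs do not depend on $c$; each is mapped bijectively onto $[0,c(1+\theta)^{1+1/\theta}/\theta]$). *)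

theory Defs
  imports "HOL-Complex_Analysis.Complex_Analysis"
begin

text \<open>This is analytic on
  C minus [-1,0] (since 1 + 1/s is a nonpositive real iff s in [-1,0))
  and satisfies J_c(s) ~ c s at infinity.\<close>
definition Jc :: "real \<Rightarrow> real \<Rightarrow> complex \<Rightarrow> complex" where
  "Jc \<theta> c s = complex_of_real c * (s + 1) * ((1 + 1 / s) powr complex_of_real (1 / \<theta>))"

text \<open>Parametrisation of the upper arc gamma_1 on which J_c is real and
  nonnegative: with a = arg(s+1) in [0, pi/(theta+1)] one has arg s = (theta+1) a
  and s = sin a / sin(theta a) * e^{i(theta+1)a}.  At a = 0 the point is 1/theta,
  at a = pi/(theta+1) the point is -1.\<close>
definition arc_pt :: "real \<Rightarrow> real \<Rightarrow> complex" where
  "arc_pt \<theta> a = (if a = 0 then complex_of_real (1 / \<theta>)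
      else complex_of_real (sin a / sin (\<theta> * a)) * cis ((\<theta> + 1) * a))"

definition gamma_up :: "real \<Rightarrow> real \<Rightarrow> complex" where
  "gamma_up \<theta> t = arc_pt \<theta> (t * (pi / (\<theta> + 1)))"

definition gamma_curve :: "real \<Rightarrow> real \<Rightarrow> complex" where
  "gamma_curve \<theta> = gamma_up \<theta> +++ reversepath (cnj \<circ> gamma_up \<theta>)"

end

theory Submission
  imports Defs
begin

definition Ss :: "real \<Rightarrow> real" where
  "Ss x = (\<Sum>n. sin_coeff (Suc n) * x ^ n)"

lemma sin_summ: "summable (\<lambda>n. sin_coeff n * (x::real) ^ n)"
  using sin_converges[of x] by (simp add: sums_iff)

lemma Ss_summ: "summable (\<lambda>n. sin_coeff (Suc n) * (x::real) ^ n)"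
  using powser_split_head(3)[OF sin_summ] .

lemma Ss_mult: "x * Ss x = sin x"
proof -
  have "Ss x * x = (\<Sum>n. sin_coeff n * x ^ n) - sin_coeff 0"
    unfolding Ss_def by (rule powser_split_head(2)[OF sin_summ])
  also have "(\<Sum>n. sin_coeff n * x ^ n) = sin x"
    using sin_converges[of x] by (simp add: sums_iff)
  finally show ?thesis by (simp add: mult.commute)
qed

lemma Ss_0: "Ss 0 = 1"
proof -
  have "Ss 0 = sin_coeff (Suc 0)"
    unfolding Ss_def using powser_zero[of "\<lambda>n. sin_coeff (Suc n)"] by simp
  then show ?thesis by (simp add: sin_coeff_def)
qed

lemma Ss_eq: "x \<noteq> 0 \<Longrightarrow> Ss x = sin x / x"
  using Ss_mult[of x] by (simp add: field_simps)

definition Ss' :: "real \<Rightarrow> real" where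
  "Ss' x = (\<Sum>n. diffs (\<lambda>n. sin_coeff (Suc n)) n * x ^ n)"

lemma DERIV_Ss: "(Ss has_real_derivative Ss' x) (at x)"
  unfolding Ss_def Ss'_def
  by (rule termdiffs_strong_converges_everywhere) (rule Ss_summ)

lemma DERIV_Ss': "\<exists>D. (Ss' has_real_derivative D) (at x)"
  unfolding Ss'_def
  by (rule exI, rule termdiffs_strong_converges_everywhere, rule termdiff_converges_all, rule Ss_summ)

lemma isCont_Ss': "isCont Ss' x"
  using DERIV_Ss' DERIV_isCont by blast

lemma isCont_Ss: "isCont Ss x"
  using DERIV_Ss DERIV_isCont by blast

lemma continuous_on_Ss[continuous_intros]:
  "continuous_on S f \<Longrightarrow> continuous_on S (\<lambda>x. Ss (f x))"
  using continuous_on_compose[of S f Ss, OF _ continuous_at_imp_continuous_on]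
  by (auto simp: isCont_Ss o_def)

lemma continuous_on_Ss'[continuous_intros]:
  "continuous_on S f \<Longrightarrow> continuous_on S (\<lambda>x. Ss' (f x))"
  using continuous_on_compose[of S f Ss', OF _ continuous_at_imp_continuous_on]
  by (auto simp: isCont_Ss' o_def)

lemma Ss_pos: "\<bar>x\<bar> < pi \<Longrightarrow> Ss x > 0"
proof (cases "x = 0")
  case True then show ?thesis by (simp add: Ss_0)
next
  case False
  assume a: "\<bar>x\<bar> < pi"
  show ?thesis
  proof (cases "x > 0")
    case True then show ?thesis using a False by (simp add: Ss_eq sin_gt_zero)
  next
    case F: False
    then have "sin (-x) > 0" using a False by (intro sin_gt_zero) auto
    then show ?thesis using F False by (simp add: Ss_eq divide_neg_neg)
  qed
qed

definition AA :: "real \<Rightarrow> real" where "AA \<theta> = pi / (\<theta> + 1)"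

definition Q :: "real \<Rightarrow> real \<Rightarrow> real" where
  "Q \<theta> t = Ss (t * AA \<theta>) / (\<theta> * Ss (\<theta> * (t * AA \<theta>)))"

definition Q' :: "real \<Rightarrow> real \<Rightarrow> real" where
  "Q' \<theta> t = AA \<theta> * (Ss' (t * AA \<theta>) * Ss (\<theta> * (t * AA \<theta>)) - \<theta> * Ss (t * AA \<theta>) * Ss' (\<theta> * (t * AA \<theta>)))
     / (\<theta> * (Ss (\<theta> * (t * AA \<theta>)))\<^sup>2)"

definition UU :: "real \<Rightarrow> real set" where "UU \<theta> = {t. \<bar>\<theta> * (t * AA \<theta>)\<bar> < pi}"

lemma alg: "(Y::real) \<noteq> 0 \<Longrightarrow> \<theta> \<noteq> 0 \<Longrightarrow> (X' * A * (\<theta> * Y) - X * (\<theta> * (Y' * (\<theta> * A)))) / ((\<theta> * Y) * (\<theta> * Y)) = A * (X' * Y - \<theta> * X * Y') / (\<theta> * Y\<^sup>2)"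
  by (simp add: field_simps power2_eq_square)

context fixes \<theta> :: real assumes th: "\<theta> \<ge> 1"
begin

lemma AA_pos: "AA \<theta> > 0" using th by (simp add: AA_def)

lemma thA: "\<theta> * AA \<theta> < pi"
  using th by (simp add: AA_def field_simps)

lemma open_UU: "open (UU \<theta>)"
  unfolding UU_def by (intro open_Collect_less continuous_intros)

lemma UU_sub: "{0..1} \<subseteq> UU \<theta>"
proof
  fix t :: real assume "t \<in> {0..1}"
  then have "\<bar>\<theta> * (t * AA \<theta>)\<bar> = t * (\<theta> * AA \<theta>)" using th AA_pos by (simp add: abs_mult)
  also have "\<dots> \<le> \<theta> * AA \<theta>" using \<open>t \<in> {0..1}\<close> th AA_pos by (simp add: mult_le_cancel_right1)
  finally show "t \<in> UU \<theta>" unfolding UU_def using thA by simp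
qed

lemma Ss_th_pos: "t \<in> UU \<theta> \<Longrightarrow> Ss (\<theta> * (t * AA \<theta>)) > 0"
  unfolding UU_def by (simp add: Ss_pos)

lemma gamma_Q: assumes "t \<in> UU \<theta>"
  shows "gamma_up \<theta> t = of_real (Q \<theta> t) * cis (pi * t)"
proof (cases "t = 0")
  case True then show ?thesis
    by (simp add: gamma_up_def arc_pt_def Q_def Ss_0)
next
  case False
  have a0: "t * AA \<theta> \<noteq> 0" using False AA_pos by simp
  have th0: "\<theta> \<noteq> 0" using th by simp
  have "Q \<theta> t = sin (t * AA \<theta>) / sin (\<theta> * (t * AA \<theta>))"
    unfolding Q_def using a0 th0 by (simp add: Ss_eq field_simps)
  moreover have "(\<theta> + 1) * (t * (pi / (\<theta> + 1))) = pi * t" using th by (simp add: field_simps)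
  ultimately show ?thesis using a0 unfolding gamma_up_def arc_pt_def AA_def by (simp add: ac_simps)
qed

lemma Q_deriv: assumes "t \<in> UU \<theta>"
  shows "(Q \<theta> has_real_derivative Q' \<theta> t) (at t)"
proof -
  have p: "Ss (\<theta> * (t * AA \<theta>)) \<noteq> 0" using Ss_th_pos[OF assms] by simp
  have l1: "((\<lambda>t. t * AA \<theta>) has_real_derivative AA \<theta>) (at t)"
    using DERIV_cmult_right[OF DERIV_ident] by simp
  have d1: "((\<lambda>t. Ss (t * AA \<theta>)) has_real_derivative Ss' (t * AA \<theta>) * AA \<theta>) (at t)"
    by (rule DERIV_chain2[OF DERIV_Ss l1])
  have l2: "((\<lambda>t. \<theta> * (t * AA \<theta>)) has_real_derivative \<theta> * AA \<theta>) (at t)"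
    by (rule DERIV_cmult[OF l1])
  have d2: "((\<lambda>t. \<theta> * Ss (\<theta> * (t * AA \<theta>))) has_real_derivative \<theta> * (Ss' (\<theta> * (t * AA \<theta>)) * (\<theta> * AA \<theta>))) (at t)"
    by (rule DERIV_cmult[OF DERIV_chain2[OF DERIV_Ss l2]])
  have "((\<lambda>t. Ss (t * AA \<theta>) / (\<theta> * Ss (\<theta> * (t * AA \<theta>)))) has_real_derivative
     ((Ss' (t * AA \<theta>) * AA \<theta>) * (\<theta> * Ss (\<theta> * (t * AA \<theta>))) - Ss (t * AA \<theta>) * (\<theta> * (Ss' (\<theta> * (t * AA \<theta>)) * (\<theta> * AA \<theta>))))
       / ((\<theta> * Ss (\<theta> * (t * AA \<theta>))) * (\<theta> * Ss (\<theta> * (t * AA \<theta>))))) (at t)"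
    by (rule DERIV_divide[OF d1 d2]) (use p th in simp)
  moreover have "((Ss' (t * AA \<theta>) * AA \<theta>) * (\<theta> * Ss (\<theta> * (t * AA \<theta>))) - Ss (t * AA \<theta>) * (\<theta> * (Ss' (\<theta> * (t * AA \<theta>)) * (\<theta> * AA \<theta>))))
       / ((\<theta> * Ss (\<theta> * (t * AA \<theta>))) * (\<theta> * Ss (\<theta> * (t * AA \<theta>)))) = Q' \<theta> t"
    unfolding Q'_def using alg[OF p, of \<theta>] th by simp
  ultimately show ?thesis unfolding Q_def[abs_def] by simp
qed

lemma cont_Q': "continuous_on {0..1} (Q' \<theta>)"
proof -
  have "\<forall>t\<in>{0..1}. Ss (\<theta> * (t * AA \<theta>)) \<noteq> 0" using Ss_th_pos UU_sub by force
  then have nz: "\<forall>t\<in>{0..1}. \<theta> * (Ss (\<theta> * (t * AA \<theta>)))\<^sup>2 \<noteq> 0" using th by auto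
  show ?thesis unfolding Q'_def
    apply (rule continuous_on_divide)
      apply (intro continuous_intros)
     apply (intro continuous_intros)
    by (rule nz)
qed

lemma cont_Q: "continuous_on {0..1} (Q \<theta>)"
  using Q_deriv UU_sub by (meson DERIV_isCont continuous_at_imp_continuous_on subsetD)

lemma Q_pos: "t \<in> {0..1} \<Longrightarrow> Q \<theta> t > 0"
proof -
  assume t: "t \<in> {0..1}"
  have "\<bar>t * AA \<theta>\<bar> \<le> \<theta> * AA \<theta>" using t th AA_pos
  proof -
    have "t * AA \<theta> \<le> \<theta> * AA \<theta>" using t th AA_pos by (intro mult_right_mono) auto
    moreover have "t * AA \<theta> \<ge> 0" using t AA_pos by simp
    ultimately show ?thesis by (metis abs_of_nonneg)
  qed
  then have p1: "Ss (t * AA \<theta>) > 0" using thA by (intro Ss_pos) simp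
  have p2: "Ss (\<theta> * (t * AA \<theta>)) > 0" using Ss_th_pos[of t] t UU_sub by blast
  have p3: "\<theta> > 0" using th by simp
  show ?thesis unfolding Q_def by (rule divide_pos_pos[OF p1 mult_pos_pos[OF p3 p2]])
qed

definition gd :: "real \<Rightarrow> complex" where
  "gd t = of_real (Q' \<theta> t) * cis (pi * t) + of_real (Q \<theta> t) * (\<i> * of_real pi * cis (pi * t))"

lemma gamma_deriv: assumes "t \<in> UU \<theta>"
  shows "(gamma_up \<theta> has_vector_derivative gd t) (at t)"
proof -
  have c: "((\<lambda>x. cis (pi * x)) has_vector_derivative (\<i> * of_real pi * cis (pi * t))) (at t)"
  proof -
    have "((\<lambda>z. exp (\<i> * of_real pi * z)) has_field_derivative (exp (\<i> * of_real pi * of_real t) * (\<i> * of_real pi))) (at (of_real t))"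
      by (rule derivative_eq_intros | simp)+
    from has_vector_derivative_real_field[OF this]
    show ?thesis by (simp add: cis_conv_exp mult.commute mult.left_commute)
  qed
  have "((\<lambda>t. of_real (Q \<theta> t) * cis (pi * t)) has_vector_derivative gd t) (at t)"
    using has_vector_derivative_mult[OF has_vector_derivative_of_real[OF Q_deriv[OF assms]] c]
    unfolding gd_def by (simp add: algebra_simps)
  then show ?thesis
    by (rule has_vector_derivative_transform_within_open[OF _ open_UU assms]) (simp add: gamma_Q)
qed

lemma cont_gd: "continuous_on {0..1} gd"
  unfolding gd_def by (intro continuous_intros cont_Q cont_Q' continuous_on_of_real)

end

lemma trig1:
  fixes a th :: real
  assumes "sin (th * a) \<noteq> 0"
  shows "of_real (sin a / sin (th * a)) * cis ((th + 1) * a) + 1 =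
         of_real (sin ((th + 1) * a) / sin (th * a)) * cis a"
proof -
  have e: "(th + 1) * a = th * a + a" by (simp add: algebra_simps)
  have sq: "sin a ^ 2 + cos a ^ 2 = 1" by simp
  show ?thesis
  proof (rule complex_eqI)
    show "Re (of_real (sin a / sin (th * a)) * cis ((th + 1) * a) + 1) =
          Re (of_real (sin ((th + 1) * a) / sin (th * a)) * cis a)"
      unfolding e using assms
      apply (simp add: cos_add sin_add field_simps)
      using sq by algebra
    show "Im (of_real (sin a / sin (th * a)) * cis ((th + 1) * a) + 1) =
          Im (of_real (sin ((th + 1) * a) / sin (th * a)) * cis a)"
      unfolding e using assms
      by (simp add: cos_add sin_add field_simps)
  qed
qed

lemma powr_cis:
  fixes P x th :: real
  assumes "P \<ge> 0" "-pi < x" "x \<le> pi" "th > 0"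
  shows "(of_real P * cis x) powr complex_of_real (1 / th) = of_real (P powr (1 / th)) * cis (x / th)"
proof (cases "P = 0")
  case True then show ?thesis by simp
next
  case False
  then have P: "P > 0" using assms by simp
  have e: "of_real P * cis x = exp (of_real (ln P) + \<i> * of_real x)"
    using P by (simp add: exp_add exp_of_real cis_conv_exp)
  have l: "ln (of_real P * cis x) = of_real (ln P) + \<i> * of_real x"
    unfolding e using assms by (intro Ln_exp) auto
  have "(of_real P * cis x) powr complex_of_real (1 / th) =
        exp (complex_of_real (1 / th) * (of_real (ln P) + \<i> * of_real x))"
    using P by (simp add: powr_def l)
  also have "\<dots> = exp (of_real (ln P / th)) * exp (\<i> * of_real (x / th))"
    by (simp add: exp_add[symmetric] algebra_simps)
  also have "\<dots> = of_real (P powr (1 / th)) * cis (x / th)"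
  proof -
    have "exp (complex_of_real (ln P / th)) = of_real (P powr (1 / th))"
      by (subst exp_of_real) (use P in \<open>simp add: powr_def\<close>)
    then show ?thesis by (simp add: cis_conv_exp)
  qed
  finally show ?thesis .
qed

lemma divdiv: "(a::real) \<noteq> 0 \<Longrightarrow> (x / a) / (y / a) = x / y"
  by (cases "y = 0") (simp_all add: field_simps)

definition R1 :: "real \<Rightarrow> real \<Rightarrow> real" where
  "R1 \<theta> a = (\<theta> + 1) * Ss ((\<theta> + 1) * a) / (\<theta> * Ss (\<theta> * a))"
definition R :: "real \<Rightarrow> real \<Rightarrow> real" where
  "R \<theta> a = (\<theta> + 1) * Ss ((\<theta> + 1) * a) / Ss a"
definition rho :: "real \<Rightarrow> real \<Rightarrow> real" where
  "rho \<theta> t = R1 \<theta> (t * AA \<theta>) * (R \<theta> (t * AA \<theta>)) powr (1 / \<theta>)"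

context fixes \<theta> :: real assumes th: "\<theta> \<ge> 1"
begin

lemma R1_eq: assumes "a \<noteq> 0" shows "R1 \<theta> a = sin ((\<theta> + 1) * a) / sin (\<theta> * a)"
proof -
  have h1: "(\<theta> + 1) * a \<noteq> 0" and h2: "\<theta> * a \<noteq> 0" using assms th by auto
  have e1: "(\<theta> + 1) * (sin ((\<theta> + 1) * a) / ((\<theta> + 1) * a)) = sin ((\<theta> + 1) * a) / a"
  proof -
    have "\<theta> + 1 \<noteq> 0" using th by simp
    from mult_divide_mult_cancel_left[OF this, of "sin ((\<theta> + 1) * a)" a]
    show ?thesis by (simp only: times_divide_eq_right)
  qed
  have e2: "\<theta> * (sin (\<theta> * a) / (\<theta> * a)) = sin (\<theta> * a) / a"
  proof -
    have "\<theta> \<noteq> 0" using th by simp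
    from mult_divide_mult_cancel_left[OF this, of "sin (\<theta> * a)" a]
    show ?thesis by (simp only: times_divide_eq_right)
  qed
  show ?thesis unfolding R1_def Ss_eq[OF h1] Ss_eq[OF h2] mult.assoc[symmetric] times_divide_eq_right[symmetric] e1 e2
    using divdiv[OF assms] by simp
qed

lemma R_eq: assumes "a \<noteq> 0" shows "R \<theta> a = sin ((\<theta> + 1) * a) / sin a"
proof -
  have h1: "(\<theta> + 1) * a \<noteq> 0" using assms th by auto
  have e1: "(\<theta> + 1) * (sin ((\<theta> + 1) * a) / ((\<theta> + 1) * a)) = sin ((\<theta> + 1) * a) / a"
  proof -
    have "\<theta> + 1 \<noteq> 0" using th by simp
    from mult_divide_mult_cancel_left[OF this, of "sin ((\<theta> + 1) * a)" a]
    show ?thesis by (simp only: times_divide_eq_right)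
  qed
  show ?thesis unfolding R_def Ss_eq[OF h1] Ss_eq[OF assms] times_divide_eq_right[symmetric] e1
    using divdiv[OF assms] by simp
qed

lemma J_arc:
  assumes a: "0 < a" "a \<le> AA \<theta>"
  shows "Jc \<theta> c (arc_pt \<theta> a) = of_real (c * (R1 \<theta> a * R \<theta> a powr (1 / \<theta>)))"
    and "Jc \<theta> c (cnj (arc_pt \<theta> a)) = of_real (c * (R1 \<theta> a * R \<theta> a powr (1 / \<theta>)))"
proof -
  have thpos: "\<theta> > 0" using th by simp
  have tha: "\<theta> * a < pi"
    using thA[OF th] a th by (smt (verit) mult_left_mono)
  have tha0: "\<theta> * a > 0" using a thpos by simp
  have sth: "sin (\<theta> * a) > 0" using tha tha0 by (simp add: sin_gt_zero)
  have "a \<le> \<theta> * a" using mult_right_mono[of 1 \<theta> a] a th by simp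
  then have aA: "a < pi" using tha by simp
  have sa: "sin a > 0" using aA a by (simp add: sin_gt_zero)
  have t1a: "(\<theta> + 1) * a \<le> pi" using a th unfolding AA_def by (simp add: field_simps)
  have s1: "sin ((\<theta> + 1) * a) \<ge> 0" using t1a a th by (intro sin_ge_zero) auto
  define q where "q = sin a / sin (\<theta> * a)"
  define P1 where "P1 = sin ((\<theta> + 1) * a) / sin (\<theta> * a)"
  define P where "P = sin ((\<theta> + 1) * a) / sin a"
  have q: "q > 0" unfolding q_def using sa sth by simp
  have P: "P \<ge> 0" unfolding P_def using sa s1 by simp
  have s: "arc_pt \<theta> a = of_real q * cis ((\<theta> + 1) * a)"
    unfolding arc_pt_def q_def using a by simp
  have s0: "arc_pt \<theta> a \<noteq> 0" using s q by simp
  have sp1: "arc_pt \<theta> a + 1 = of_real P1 * cis a"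
  proof -
    have "of_real q * cis ((\<theta> + 1) * a) + 1 = of_real P1 * cis a"
      unfolding q_def P1_def by (rule trig1) (use sth in simp)
    then show ?thesis using s by simp
  qed
  have "1 + 1 / arc_pt \<theta> a = (arc_pt \<theta> a + 1) / arc_pt \<theta> a"
    using s0 by (simp add: field_simps)
  also have "\<dots> = of_real (P1 / q) * (cis a / cis ((\<theta> + 1) * a))"
    by (subst sp1) (simp add: s)
  also have "\<dots> = of_real P * cis (- (\<theta> * a))"
    unfolding cis_divide P1_def q_def P_def using sth sa by (simp add: algebra_simps)
  finally have w: "1 + 1 / arc_pt \<theta> a = of_real P * cis (- (\<theta> * a))" .
  have pw: "(1 + 1 / arc_pt \<theta> a) powr complex_of_real (1 / \<theta>) = of_real (P powr (1 / \<theta>)) * cis (- a)"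
    unfolding w using powr_cis[OF P, of "- (\<theta> * a)" \<theta>] tha tha0 thpos by simp
  have w': "1 + 1 / cnj (arc_pt \<theta> a) = of_real P * cis (\<theta> * a)"
    using arg_cong[OF w, of cnj] by (simp add: cis_cnj)
  have pw': "(1 + 1 / cnj (arc_pt \<theta> a)) powr complex_of_real (1 / \<theta>) = of_real (P powr (1 / \<theta>)) * cis a"
    unfolding w' using powr_cis[OF P, of "\<theta> * a" \<theta>] tha tha0 thpos by simp
  have sp1': "cnj (arc_pt \<theta> a) + 1 = of_real P1 * cis (- a)"
    using arg_cong[OF sp1, of cnj] by (simp add: cis_cnj)
  have R1a: "R1 \<theta> a = P1" unfolding P1_def using R1_eq a by simp
  have Ra: "R \<theta> a = P" unfolding P_def using R_eq a by simp
  have cc: "cis a * cis (- a) = 1" by (simp add: cis_mult)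
  show "Jc \<theta> c (arc_pt \<theta> a) = of_real (c * (R1 \<theta> a * R \<theta> a powr (1 / \<theta>)))"
    unfolding Jc_def pw sp1 R1a Ra
    by (simp add: mult.assoc mult.left_commute[of "cis a"] cc)
  show "Jc \<theta> c (cnj (arc_pt \<theta> a)) = of_real (c * (R1 \<theta> a * R \<theta> a powr (1 / \<theta>)))"
    unfolding Jc_def pw' sp1' R1a Ra
    by (simp add: mult.assoc mult.left_commute[of "cis (- a)"] cc[unfolded mult.commute[of "cis a"]])
qed

lemma J_gamma:
  assumes t: "t \<in> {0..1}"
  shows "Jc \<theta> c (gamma_up \<theta> t) = of_real (c * rho \<theta> t)"
    and "Jc \<theta> c (cnj (gamma_up \<theta> t)) = of_real (c * rho \<theta> t)"
proof -
  have "Jc \<theta> c (gamma_up \<theta> t) = of_real (c * rho \<theta> t) \<and> Jc \<theta> c (cnj (gamma_up \<theta> t)) = of_real (c * rho \<theta> t)"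
  proof (cases "t = 0")
    case True
    have thpos: "\<theta> > 0" using th by simp
    have g: "gamma_up \<theta> t = of_real (1 / \<theta>)" using True by (simp add: gamma_up_def arc_pt_def)
    have r: "rho \<theta> t = (\<theta> + 1) / \<theta> * (\<theta> + 1) powr (1 / \<theta>)"
      using True unfolding rho_def R1_def R_def by (simp add: Ss_0)
    have e: "1 + 1 / complex_of_real (1 / \<theta>) = of_real (1 + \<theta>)" using thpos by simp
    have "Jc \<theta> c (gamma_up \<theta> t) = of_real (c * rho \<theta> t)"
      unfolding Jc_def g e r using thpos
      by (subst powr_of_real) (auto simp: field_simps add.commute)
    then show ?thesis using g by simp
  next
    case False
    then have a: "0 < t * AA \<theta>" "t * AA \<theta> \<le> AA \<theta>" using t AA_pos[OF th] by auto
    show ?thesis using J_arc[OF a, unfolded AA_def] unfolding gamma_up_def rho_def by (simp add: AA_def)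
  qed
  then show "Jc \<theta> c (gamma_up \<theta> t) = of_real (c * rho \<theta> t)"
    and "Jc \<theta> c (cnj (gamma_up \<theta> t)) = of_real (c * rho \<theta> t)" by auto
qed

end

context fixes \<theta> :: real assumes th: "\<theta> \<ge> 1"
begin

lemma t1A: "(\<theta> + 1) * (t * AA \<theta>) = pi * t"
  using th unfolding AA_def by (simp add: field_simps)

lemma Ss_nonneg: "0 \<le> x \<Longrightarrow> x \<le> pi \<Longrightarrow> Ss x \<ge> 0"
  by (cases "x = pi") (auto simp: Ss_eq intro: less_imp_le[OF Ss_pos])

lemma Ss_a_pos: "t \<in> {0..1} \<Longrightarrow> Ss (t * AA \<theta>) > 0"
proof -
  assume t: "t \<in> {0..1}"
  have "t * AA \<theta> \<le> \<theta> * AA \<theta>" using t th AA_pos[OF th] by (intro mult_right_mono) auto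
  moreover have "t * AA \<theta> \<ge> 0" using t AA_pos[OF th] by simp
  ultimately have "\<bar>t * AA \<theta>\<bar> < pi" using thA[OF th] by (metis abs_of_nonneg le_less_trans)
  then show ?thesis by (rule Ss_pos)
qed

lemma cont_rho: "continuous_on {0..1} (rho \<theta>)"
proof -
  have nz1: "\<forall>t\<in>{0..1}. \<theta> * Ss (\<theta> * (t * AA \<theta>)) \<noteq> 0"
    using Ss_th_pos[OF th] UU_sub[OF th] th by force
  have nz2: "\<forall>t\<in>{0..1}. Ss (t * AA \<theta>) \<noteq> 0"
    using Ss_a_pos by force
  have c1: "continuous_on {0..1} (\<lambda>t. R1 \<theta> (t * AA \<theta>))"
    unfolding R1_def
    apply (rule continuous_on_divide)
      apply (intro continuous_intros)
     apply (intro continuous_intros)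
    by (rule nz1)
  have c2: "continuous_on {0..1} (\<lambda>t. R \<theta> (t * AA \<theta>))"
    unfolding R_def
    apply (rule continuous_on_divide)
      apply (intro continuous_intros)
     apply (intro continuous_intros)
    by (rule nz2)
  have nn: "\<forall>t\<in>{0..1}. R \<theta> (t * AA \<theta>) \<ge> 0"
  proof
    fix t :: real assume t: "t \<in> {0..1}"
    have "Ss ((\<theta> + 1) * (t * AA \<theta>)) \<ge> 0" unfolding t1A using t
      by (intro Ss_nonneg) (auto simp: mult_le_cancel_left1)
    then show "R \<theta> (t * AA \<theta>) \<ge> 0" unfolding R_def using Ss_a_pos[OF t] th by simp
  qed
  have c3: "continuous_on {0..1} (\<lambda>t. R \<theta> (t * AA \<theta>) powr (1 / \<theta>))"
    by (rule continuous_on_powr'[OF c2 continuous_on_const]) (use nn th in auto)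
  show ?thesis unfolding rho_def[abs_def] by (intro continuous_on_mult c1 c3)
qed

lemma rho_pos: "0 \<le> t \<Longrightarrow> t < 1 \<Longrightarrow> rho \<theta> t > 0"
proof -
  assume t: "0 \<le> t" "t < 1"
  then have t': "t \<in> {0..1}" by simp
  have s1: "Ss ((\<theta> + 1) * (t * AA \<theta>)) > 0" unfolding t1A using t by (intro Ss_pos) auto
  have s2: "Ss (\<theta> * (t * AA \<theta>)) > 0" using Ss_th_pos[OF th] UU_sub[OF th] t' by blast
  have r1: "R1 \<theta> (t * AA \<theta>) > 0" unfolding R1_def using s1 s2 th by simp
  have r: "R \<theta> (t * AA \<theta>) > 0" unfolding R_def using s1 Ss_a_pos[OF t'] th by simp
  show ?thesis unfolding rho_def using r1 r by simp
qed

lemma rho_nonneg: "t \<in> {0..1} \<Longrightarrow> rho \<theta> t \<ge> 0"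
proof -
  assume t: "t \<in> {0..1}"
  show ?thesis
  proof (cases "t = 1")
    case True
    have "Ss ((\<theta> + 1) * (1 * AA \<theta>)) = 0" unfolding t1A by (simp add: Ss_eq)
    then show ?thesis using True unfolding rho_def R1_def by simp
  next
    case False then show ?thesis using rho_pos[of t] t by simp
  qed
qed

lemma valid_up: "valid_path (gamma_up \<theta>)"
proof -
  have "gamma_up \<theta> C1_differentiable_on {0..1}"
    unfolding C1_differentiable_on_def
    using gamma_deriv[OF th] UU_sub[OF th] cont_gd[OF th] by blast
  then show ?thesis unfolding valid_path_def by (rule C1_differentiable_imp_piecewise)
qed

lemma vd_up: "t \<in> {0..1} \<Longrightarrow> vector_derivative (gamma_up \<theta>) (at t) = gd \<theta> t"
  using gamma_deriv[OF th] UU_sub[OF th] by (meson subsetD vector_derivative_at)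

lemma vd_cnj: "t \<in> {0..1} \<Longrightarrow> vector_derivative (cnj \<circ> gamma_up \<theta>) (at t) = cnj (gd \<theta> t)"
proof -
  assume t: "t \<in> {0..1}"
  have "gamma_up \<theta> differentiable at t" using gamma_deriv[OF th] UU_sub[OF th] t
    by (meson differentiableI_vector subsetD)
  then show ?thesis using vector_derivative_cnj[of "gamma_up \<theta>" t] vd_up[OF t] by (simp add: o_def)
qed

lemma gamma_nz: "t \<in> {0..1} \<Longrightarrow> gamma_up \<theta> t \<noteq> 0"
  using gamma_Q[OF th] UU_sub[OF th] Q_pos[OF th] by force

end

lemma alg2: "(q::complex) \<noteq> 0 \<Longrightarrow> C \<noteq> 0 \<Longrightarrow> a / (q * C) * (p * C + q * (\<i> * r * C)) = a * (p / q + \<i> * r)"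
proof -
  assume q: "q \<noteq> 0" and C: "C \<noteq> 0"
  have "p * C + q * (\<i> * r * C) = (p + q * (\<i> * r)) * C" by (simp add: algebra_simps)
  then have "a / (q * C) * (p * C + q * (\<i> * r * C)) = a * (p + q * (\<i> * r)) / q"
    using C by simp
  also have "\<dots> = a * (p / q + \<i> * r)" using q by (simp add: divide_simps)
  finally show ?thesis .
qed

context fixes \<theta> :: real and Vp :: "real \<Rightarrow> real" and c :: real
  assumes th: "\<theta> \<ge> 1" and contVp: "continuous_on {0..} Vp" and c0: "c \<ge> 0"
begin

definition ff :: "complex \<Rightarrow> complex" where
  "ff s = complex_of_real (Vp (Re (Jc \<theta> c s))) * Jc \<theta> c s / s"

definition gg :: "real \<Rightarrow> real" where
  "gg t = c * rho \<theta> t * Vp (c * rho \<theta> t)"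

definition hh :: "real \<Rightarrow> complex" where
  "hh t = ff (gamma_up \<theta> t) * gd \<theta> t"

lemma ff_up: "t \<in> {0..1} \<Longrightarrow> ff (gamma_up \<theta> t) = of_real (gg t) / gamma_up \<theta> t"
  unfolding ff_def gg_def using J_gamma(1)[OF th, of t c] by (simp add: mult.commute)

lemma ff_cnj: "t \<in> {0..1} \<Longrightarrow> ff (cnj (gamma_up \<theta> t)) = cnj (ff (gamma_up \<theta> t))"
  unfolding ff_def using J_gamma[OF th, of t c] by simp

lemma cont_crho: "continuous_on {0..1} (\<lambda>t. c * rho \<theta> t)"
  by (intro continuous_intros cont_rho[OF th])

lemma cont_gg: "continuous_on {0..1} gg"
proof -
  have "continuous_on {0..1} (\<lambda>t. Vp (c * rho \<theta> t))"
    by (rule continuous_on_compose2[OF contVp cont_crho]) (use c0 rho_nonneg[OF th] in auto)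
  then show ?thesis unfolding gg_def[abs_def] by (intro continuous_intros cont_rho[OF th])
qed

lemma hh_eq: "t \<in> {0..1} \<Longrightarrow> hh t = of_real (gg t) * (of_real (Q' \<theta> t / Q \<theta> t) + \<i> * of_real pi)"
proof -
  assume t: "t \<in> {0..1}"
  have q: "Q \<theta> t \<noteq> 0" using Q_pos[OF th t] by simp
  have ci: "cis (pi * t) \<noteq> 0" by simp
  have g: "gamma_up \<theta> t = of_real (Q \<theta> t) * cis (pi * t)"
    using gamma_Q[OF th] UU_sub[OF th] t by blast
  have "hh t = of_real (gg t) / gamma_up \<theta> t * gd \<theta> t" by (simp add: hh_def ff_up[OF t])
  also have "\<dots> = of_real (gg t) * (of_real (Q' \<theta> t / Q \<theta> t) + \<i> * of_real pi)"
    unfolding g gd_def using alg2[of "of_real (Q \<theta> t)" "cis (pi * t)" "of_real (gg t)" "of_real (Q' \<theta> t)" "of_real pi"] q ci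
    by (simp add: gd_def[OF th])
  finally show ?thesis .
qed

lemma Im_hh: "t \<in> {0..1} \<Longrightarrow> Im (hh t) = pi * gg t"
  using hh_eq by simp

lemma cont_hh: "continuous_on {0..1} hh"
proof -
  have "continuous_on {0..1} (\<lambda>t. of_real (gg t) / gamma_up \<theta> t * gd \<theta> t)"
    apply (intro continuous_intros cont_gd[OF th] continuous_on_of_real cont_gg)
    using valid_path_imp_path[OF valid_up[OF th]] gamma_nz[OF th] unfolding path_def by auto
  then show ?thesis by (rule continuous_on_eq) (auto simp: hh_def ff_up)
qed

lemma contour_main:
  "(ff has_contour_integral (2 * of_real pi * \<i> * of_real (integral {0..1} gg))) (gamma_curve \<theta>)"
proof -
  define I1 where "I1 = integral {0..1} hh"
  define G where "G = integral {0..1} gg"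
  have hint: "(hh has_integral I1) {0..1}" unfolding I1_def
    using integrable_continuous_interval[OF cont_hh] by (simp add: has_integral_integral)
  have ggint: "(gg has_integral G) {0..1}" unfolding G_def
    using integrable_continuous_interval[OF cont_gg] by (simp add: has_integral_integral)
  have "((Im \<circ> hh) has_integral Im I1) {0..1}" by (rule has_integral_linear[OF hint bounded_linear_Im])
  moreover have "((Im \<circ> hh) has_integral pi * G) {0..1}"
  proof -
    have "((\<lambda>t. pi * gg t) has_integral pi * G) {0..1}" by (rule has_integral_mult_right[OF ggint])
    then show ?thesis by (subst has_integral_cong[of _ _ "\<lambda>t. pi * gg t"]) (auto simp: Im_hh)
  qed
  ultimately have ImI: "Im I1 = pi * G" by (rule has_integral_unique)
  have c1: "(ff has_contour_integral I1) (gamma_up \<theta>)"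
    unfolding has_contour_integral
    by (subst has_integral_cong[of _ _ hh]) (auto simp: vd_up[OF th] hh_def hint)
  have c2: "(ff has_contour_integral cnj I1) (cnj \<circ> gamma_up \<theta>)"
  proof -
    have "((cnj \<circ> hh) has_integral cnj I1) {0..1}" using hint by (simp add: has_integral_cnj)
    then show ?thesis unfolding has_contour_integral
      by (subst has_integral_cong[of _ _ "cnj \<circ> hh"]) (auto simp: vd_cnj[OF th] hh_def ff_cnj)
  qed
  have vc: "valid_path (cnj \<circ> gamma_up \<theta>)" using valid_path_cnj valid_up[OF th] by blast
  have c3: "(ff has_contour_integral (- cnj I1)) (reversepath (cnj \<circ> gamma_up \<theta>))"
    by (rule has_contour_integral_reversepath[OF vc c2])
  have "(ff has_contour_integral (I1 + - cnj I1)) (gamma_curve \<theta>)"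
    unfolding gamma_curve_def
    by (rule has_contour_integral_join[OF c1 c3 valid_up[OF th]]) (simp add: vc)
  moreover have "I1 + - cnj I1 = 2 * of_real pi * \<i> * of_real G"
    by (rule complex_eqI) (simp_all add: ImI)
  ultimately show ?thesis unfolding G_def by simp
qed

end

lemma deriv_at:
  assumes "(f has_real_derivative D) (at x within {0..})" "x > 0"
  shows "(f has_real_derivative D) (at x)"
proof -
  have "(f has_real_derivative D) (at x within {0<..})"
    by (rule has_field_derivative_subset[OF assms(1)]) auto
  then show ?thesis using at_within_open[of x "{0<..}"] assms(2) by simp
qed

definition gfun :: "(real \<Rightarrow> real) \<Rightarrow> real \<Rightarrow> real" where
  "gfun Vp x = x * Vp x"

definition Hfun :: "real \<Rightarrow> (real \<Rightarrow> real) \<Rightarrow> real \<Rightarrow> real" where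
  "Hfun \<theta> Vp c = integral {0..1} (\<lambda>t. gfun Vp (c * rho \<theta> t))"

context
  fixes \<theta> :: real and V V' V'' :: "real \<Rightarrow> real"
  assumes th: "\<theta> \<ge> 1"
    and dV: "\<And>x. x \<ge> 0 \<Longrightarrow> (V has_real_derivative V' x) (at x within {0..})"
    and dV': "\<And>x. x \<ge> 0 \<Longrightarrow> (V' has_real_derivative V'' x) (at x within {0..})"
    and lim: "filterlim (\<lambda>x. V x / ln x) at_top at_top"
    and pos1: "\<And>x. x > 0 \<Longrightarrow> V'' x * x + V' x > 0"
begin

lemma contV': "continuous_on {0..} V'"
  unfolding continuous_on_eq_continuous_within
  by (metis atLeast_iff DERIV_continuous dV')

lemma cont_g: "continuous_on {0..} (gfun V')"
  unfolding gfun_def[abs_def] by (intro continuous_intros contV')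

lemma g_strict: assumes "0 \<le> x" "x < y" shows "gfun V' x < gfun V' y"
proof (rule DERIV_pos_imp_increasing_open[OF assms(2)])
  fix z assume z: "x < z" "z < y"
  then have z0: "z > 0" using assms by simp
  have "((\<lambda>x. x * V' x) has_real_derivative (1 * V' z + V'' z * z)) (at z)"
    by (rule DERIV_mult[OF DERIV_ident deriv_at[OF dV' z0]]) (use z0 in simp)
  then show "\<exists>y. (gfun V' has_real_derivative y) (at z) \<and> 0 < y"
    using pos1[OF z0] unfolding gfun_def[abs_def] by (intro exI[of _ "1 * V' z + V'' z * z"]) simp
next
  show "continuous_on {x..y} (gfun V')"
    by (rule continuous_on_subset[OF cont_g]) (use assms in auto)
qed

lemma g_mono: "0 \<le> x \<Longrightarrow> x \<le> y \<Longrightarrow> gfun V' x \<le> gfun V' y"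
  using g_strict by (cases "x = y") (auto simp: less_imp_le order.order_iff_strict)

lemma g_nonneg: "0 \<le> x \<Longrightarrow> gfun V' x \<ge> 0"
  using g_mono[of 0 x] by (simp add: gfun_def)

lemma g_unb: "\<exists>x\<ge>0. gfun V' x > M"
proof (rule ccontr)
  assume "\<not> ?thesis"
  then have b: "\<And>x. x \<ge> 0 \<Longrightarrow> gfun V' x \<le> M" by (simp add: not_less)
  have M0: "M \<ge> 0" using b[of 0] by (simp add: gfun_def)
  have Vb: "V x \<le> V 1 + M * ln x" if x: "x \<ge> 1" for x
  proof -
    have "V x - M * ln x \<le> V 1 - M * ln 1"
    proof (rule DERIV_nonpos_imp_nonincreasing[OF x])
      fix z assume z: "1 \<le> z" "z \<le> x"
      then have z0: "z > 0" by simp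
      have "((\<lambda>x. V x - M * ln x) has_real_derivative V' z - M * (1 / z)) (at z)"
        by (intro DERIV_diff deriv_at[OF dV] DERIV_cmult DERIV_ln_divide) (use z0 in auto)
      moreover have "V' z - M * (1 / z) \<le> 0"
      proof -
        have "z * V' z \<le> M" using b[of z] z0 by (simp add: gfun_def)
        then have "V' z \<le> M / z" using z0 by (simp add: field_simps)
        then show ?thesis by simp
      qed
      ultimately show "\<exists>y. ((\<lambda>x. V x - M * ln x) has_real_derivative y) (at z) \<and> y \<le> 0" by blast
    qed
    then show ?thesis by simp
  qed
  obtain N where N: "\<And>x. x \<ge> N \<Longrightarrow> \<bar>V 1\<bar> + M + 1 \<le> V x / ln x"
    using lim unfolding filterlim_at_top eventually_at_top_linorder by blast
  define x where "x = max N (exp 1)"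
  have xe: "x \<ge> exp 1" unfolding x_def by simp
  have x1: "ln x \<ge> 1" proof -
    have "0 < x" using xe exp_gt_zero[of 1] by linarith
    then have "ln (exp 1) \<le> ln x" using xe by (subst ln_le_cancel_iff) auto
    then show ?thesis by simp
  qed
  have xge: "x \<ge> 1" unfolding x_def using one_le_exp_iff[of 1] by linarith
  have "V x / ln x \<le> (V 1 + M * ln x) / ln x"
    using Vb[OF xge] x1 by (simp add: divide_right_mono)
  also have "\<dots> = V 1 / ln x + M" using x1 by (simp add: field_simps)
  also have "\<dots> \<le> \<bar>V 1\<bar> + M"
  proof -
    have "V 1 / ln x \<le> \<bar>V 1\<bar> / ln x" using x1 by (simp add: divide_right_mono)
    also have "\<dots> \<le> \<bar>V 1\<bar>" using x1 mult_left_mono[OF x1, of "\<bar>V 1\<bar>"] by (simp add: divide_le_eq)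
    finally show ?thesis by simp
  qed
  finally show False using N[of x] unfolding x_def by simp
qed

lemma cont_crho2: "continuous_on ({0..} \<times> {0..1}) (\<lambda>p. fst p * rho \<theta> (snd p))"
proof -
  have "continuous_on ({0..} \<times> {0..1}) (\<lambda>p. rho \<theta> (snd p))"
    by (rule continuous_on_compose2[OF cont_rho[OF th] continuous_on_snd]) auto
  then show ?thesis by (intro continuous_intros)
qed

lemma cont_gr: "continuous_on ({0..} \<times> {0..1}) (\<lambda>(c, t). gfun V' (c * rho \<theta> t))"
proof -
  have "continuous_on ({0..} \<times> {0..1}) (\<lambda>p. gfun V' (fst p * rho \<theta> (snd p)))"
    by (rule continuous_on_compose2[OF cont_g cont_crho2]) (auto intro!: mult_nonneg_nonneg rho_nonneg[OF th])
  then show ?thesis by (simp add: split_beta)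
qed

lemma cont_H: "continuous_on {0..} (Hfun \<theta> V')"
proof -
  have "continuous_on {0..} (\<lambda>c. integral (cbox 0 1) (\<lambda>t. gfun V' (c * rho \<theta> t)))"
    by (rule integral_continuous_on_param) (use cont_gr in \<open>simp add: cbox_interval\<close>)
  then show ?thesis unfolding Hfun_def[abs_def] by (simp add: cbox_interval)
qed

lemma cont_gc: "c \<ge> 0 \<Longrightarrow> continuous_on {0..1} (\<lambda>t. gfun V' (c * rho \<theta> t))"
  by (rule continuous_on_compose2[OF cont_g]) (auto intro!: continuous_intros cont_rho[OF th] mult_nonneg_nonneg rho_nonneg[OF th])

lemma int_gc: "c \<ge> 0 \<Longrightarrow> {a..b} \<subseteq> {0..1} \<Longrightarrow> (\<lambda>t. gfun V' (c * rho \<theta> t)) integrable_on {a..b}"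
  by (rule integrable_continuous_interval, rule continuous_on_subset[OF cont_gc])

lemma H0: "Hfun \<theta> V' 0 = 0"
  unfolding Hfun_def gfun_def by simp

lemma H_strict: assumes c: "0 \<le> c1" "c1 < c2" shows "Hfun \<theta> V' c1 < Hfun \<theta> V' c2"
proof (rule ccontr)
  assume "\<not> ?thesis"
  then have le: "Hfun \<theta> V' c2 \<le> Hfun \<theta> V' c1" by simp
  define d where "d t = gfun V' (c2 * rho \<theta> t) - gfun V' (c1 * rho \<theta> t)" for t
  have i1: "(\<lambda>t. gfun V' (c1 * rho \<theta> t)) integrable_on {0..1}" using int_gc[of c1 0 1] c by simp
  have i2: "(\<lambda>t. gfun V' (c2 * rho \<theta> t)) integrable_on {0..1}" using int_gc[of c2 0 1] c by simp
  have dint: "integral {0..1} d = Hfun \<theta> V' c2 - Hfun \<theta> V' c1"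
    unfolding d_def[abs_def] Hfun_def by (rule integral_diff[OF i2 i1])
  have dnn: "\<And>t. t \<in> {0..1} \<Longrightarrow> 0 \<le> d t"
  proof -
    fix t :: real assume t: "t \<in> {0..1}"
    have r: "rho \<theta> t \<ge> 0" using rho_nonneg[OF th t] .
    have "c1 * rho \<theta> t \<le> c2 * rho \<theta> t" using c r by (intro mult_right_mono) auto
    then show "0 \<le> d t" unfolding d_def using g_mono[of "c1 * rho \<theta> t"] c r by simp
  qed
  have dI: "d integrable_on {0..1}" unfolding d_def[abs_def] using i1 i2 by (rule integrable_diff[rotated])
  have "integral {0..1} d \<ge> 0" by (rule integral_nonneg[OF dI dnn])
  then have "integral {0..1} d = 0" using dint le by simp
  then have h0: "(d has_integral 0) (cbox 0 1)" using dI by (metis has_integral_integral cbox_interval)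
  have cd: "continuous_on (cbox 0 1) d" unfolding d_def[abs_def] cbox_interval
    using cont_gc c by (intro continuous_intros) auto
  have "d 0 = 0"
    by (rule has_integral_0_cbox_imp_0[OF cd _ h0]) (auto simp: box_real cbox_interval dnn)
  moreover have "d 0 > 0"
  proof -
    have r: "rho \<theta> 0 > 0" by (rule rho_pos[OF th]) auto
    then have "c1 * rho \<theta> 0 < c2 * rho \<theta> 0" using c by simp
    then show ?thesis unfolding d_def using g_strict[of "c1 * rho \<theta> 0"] c r by simp
  qed
  ultimately show False by simp
qed

lemma H_big: "\<exists>C\<ge>0. Hfun \<theta> V' C > M"
proof -
  have "\<exists>t0\<in>{0..1/2}. \<forall>t\<in>{0..1/2}. rho \<theta> t0 \<le> rho \<theta> t"
    by (rule continuous_attains_inf) (auto intro: continuous_on_subset[OF cont_rho[OF th]])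
  then obtain t0 where t0: "t0 \<in> {0..1/2}" and mn: "\<And>t. t \<in> {0..1/2} \<Longrightarrow> rho \<theta> t0 \<le> rho \<theta> t" by blast
  define m where "m = rho \<theta> t0"
  have m: "m > 0" unfolding m_def using t0 by (intro rho_pos[OF th]) auto
  obtain x where x: "x \<ge> 0" "gfun V' x > 2 * M" using g_unb by blast
  define C where "C = x / m"
  have C: "C \<ge> 0" unfolding C_def using x m by simp
  have Cm: "C * m = x" unfolding C_def using m by simp
  have "integral {0..(1/2::real)} (\<lambda>t. gfun V' x) \<le> integral {0..1/2} (\<lambda>t. gfun V' (C * rho \<theta> t))"
  proof (rule integral_le)
    show "(\<lambda>t. gfun V' (C * rho \<theta> t)) integrable_on {0..1/2}" using int_gc[OF C] by simp
    fix t :: real assume t: "t \<in> {0..1/2}"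
    have "C * m \<le> C * rho \<theta> t" using mn[OF t] C unfolding m_def by (intro mult_left_mono) auto
    then show "gfun V' x \<le> gfun V' (C * rho \<theta> t)" using g_mono[of x] x Cm by simp
  qed (rule integrable_const_ivl)
  then have a: "gfun V' x / 2 \<le> integral {0..1/2} (\<lambda>t. gfun V' (C * rho \<theta> t))" by simp
  have b: "0 \<le> integral {1/2..1} (\<lambda>t. gfun V' (C * rho \<theta> t))"
    by (rule integral_nonneg) (use int_gc[OF C] C in \<open>auto intro!: g_nonneg mult_nonneg_nonneg rho_nonneg[OF th]\<close>)
  have "integral {0..1/2} (\<lambda>t. gfun V' (C * rho \<theta> t)) + integral {1/2..1} (\<lambda>t. gfun V' (C * rho \<theta> t))
        = Hfun \<theta> V' C"
    unfolding Hfun_def by (rule Henstock_Kurzweil_Integration.integral_combine) (use int_gc[OF C] in auto)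
  then have "Hfun \<theta> V' C > M" using a b x by simp
  then show ?thesis using C by blast
qed

end

theorem lemma4p2:
  fixes \<theta> :: real and V V' V'' :: "real \<Rightarrow> real"
  assumes "\<theta> \<ge> 1"
    and "\<And>x. x \<ge> 0 \<Longrightarrow> (V has_real_derivative V' x) (at x within {0..})"
    and "\<And>x. x \<ge> 0 \<Longrightarrow> (V' has_real_derivative V'' x) (at x within {0..})"
    and "continuous_on {0..} V''"
    and "filterlim (\<lambda>x. V x / ln x) at_top at_top"
    and "\<And>x. x > 0 \<Longrightarrow> V'' x * x + V' x > 0"
    and "\<And>x. x > 0 \<Longrightarrow> V'' x \<ge> 0"
  shows "\<exists>!c. c > 0 \<and>
    ((\<lambda>s. complex_of_real (V' (Re (Jc \<theta> c s))) * Jc \<theta> c s / s)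
       has_contour_integral (2 * of_real pi * \<i> * complex_of_real (1 + \<theta>))) (gamma_curve \<theta>)"
proof -
  note th = assms(1)
  note A = assms(1,2,3,5,6)
  have cV: "continuous_on {0..} V'" by (rule contV'[OF A])
  have key: "((\<lambda>s. complex_of_real (V' (Re (Jc \<theta> c s))) * Jc \<theta> c s / s)
       has_contour_integral (2 * of_real pi * \<i> * complex_of_real (1 + \<theta>))) (gamma_curve \<theta>)
       \<longleftrightarrow> Hfun \<theta> V' c = 1 + \<theta>" if c: "c > 0" for c
  proof -
    have c0: "c \<ge> 0" using c by simp
    have f: "(\<lambda>s. complex_of_real (V' (Re (Jc \<theta> c s))) * Jc \<theta> c s / s) = ff \<theta> V' c"
      by (rule ext) (simp add: ff_def[OF th cV c0])
    have g: "integral {0..1} (gg \<theta> V' c) = Hfun \<theta> V' c"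
      unfolding Hfun_def gfun_def by (simp add: gg_def[OF th cV c0, abs_def])
    have m: "(ff \<theta> V' c has_contour_integral (2 * of_real pi * \<i> * of_real (Hfun \<theta> V' c))) (gamma_curve \<theta>)"
      using contour_main[OF th cV c0] unfolding g .
    show ?thesis
    proof
      assume h: "((\<lambda>s. complex_of_real (V' (Re (Jc \<theta> c s))) * Jc \<theta> c s / s)
       has_contour_integral (2 * of_real pi * \<i> * complex_of_real (1 + \<theta>))) (gamma_curve \<theta>)"
      have "2 * of_real pi * \<i> * of_real (Hfun \<theta> V' c) = 2 * of_real pi * \<i> * (complex_of_real (1 + \<theta>))"
        using has_contour_integral_unique[OF m h[unfolded f]] .
      then have "complex_of_real (Hfun \<theta> V' c) = complex_of_real (1 + \<theta>)" by simp
      then show "Hfun \<theta> V' c = 1 + \<theta>" using of_real_eq_iff by blast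
    next
      assume "Hfun \<theta> V' c = 1 + \<theta>"
      then show "((\<lambda>s. complex_of_real (V' (Re (Jc \<theta> c s))) * Jc \<theta> c s / s)
       has_contour_integral (2 * of_real pi * \<i> * complex_of_real (1 + \<theta>))) (gamma_curve \<theta>)"
        using m unfolding f by simp
    qed
  qed
  obtain C where C: "C \<ge> 0" "Hfun \<theta> V' C > 1 + \<theta>" using H_big[OF A] by blast
  have "\<exists>x. 0 \<le> x \<and> x \<le> C \<and> Hfun \<theta> V' x = 1 + \<theta>"
    by (rule IVT') (use C H0[OF A] th continuous_on_subset[OF cont_H[OF A]] in auto)
  then obtain c where c: "0 \<le> c" "Hfun \<theta> V' c = 1 + \<theta>" by blast
  have cpos: "c > 0" using c H0[OF A] th by (cases "c = 0") auto
  show ?thesis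
  proof (rule ex1I[of _ c])
    show "c > 0 \<and> ((\<lambda>s. complex_of_real (V' (Re (Jc \<theta> c s))) * Jc \<theta> c s / s)
       has_contour_integral (2 * of_real pi * \<i> * complex_of_real (1 + \<theta>))) (gamma_curve \<theta>)"
      using key[OF cpos] c cpos by simp
  next
    fix d assume d: "d > 0 \<and> ((\<lambda>s. complex_of_real (V' (Re (Jc \<theta> d s))) * Jc \<theta> d s / s)
       has_contour_integral (2 * of_real pi * \<i> * complex_of_real (1 + \<theta>))) (gamma_curve \<theta>)"
    then have hd: "Hfun \<theta> V' d = 1 + \<theta>" using key by blast
    show "d = c"
    proof (rule ccontr)
      assume "d \<noteq> c"
      then consider "d < c" | "c < d" by linarith
      then show False
      proof cases
        case 1 then show ?thesis using H_strict[OF A, of d c] d hd c by simp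
      next
        case 2 then show ?thesis using H_strict[OF A, of c d] cpos hd c by simp
      qed
    qed
  qed
qed

end
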